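(* Let $G=\operatorname{SL}(V)$ with $\dim V=n\ge2$. Every $G$-invariant alternating bilinear form on $V\otimes V^*$ is a scalar multiple of $b_V$.
   Context: $K$ is an algebraically closed field of characteristic 2. The form $b_V$ on $V\otimes V^*$ is defined by $b_V(v\otimes f,v'\otimes f')=f(v')f'(v)+f(v)f'(v')$ for $v,v'\in V$, $f,f'\in V^*$. *)

theory Defs
  imports "HOL-Analysis.Analysis" "HOL-Computational_Algebra.Polynomial"
begin

text \<open>V = K^n (type 'n indexes a basis), V* = K^n via the standard pairing.
  V \<otimes> V* is identified with n\<times>n matrices, v \<otimes> f corresponding to the matrix (v_i f_j).\<close>

definition pairing :: "'a::comm_ring_1^'n \<Rightarrow> 'a^'n \<Rightarrow> 'a" where
  "pairing f v = (\<Sum>i\<in>UNIV. f$i * v$i)"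

definition tensor :: "'a::comm_ring_1^'n \<Rightarrow> 'a^'n \<Rightarrow> 'a^'n^'n" where
  "tensor v f = (\<chi> i j. v$i * f$j)"

definition bV_pure :: "'a::comm_ring_1^'n \<Rightarrow> 'a^'n \<Rightarrow> 'a^'n \<Rightarrow> 'a^'n \<Rightarrow> 'a" where
  "bV_pure v f v' f' = pairing f v' * pairing f' v + pairing f v * pairing f' v'"

definition bV :: "'a::comm_ring_1^'n^'n \<Rightarrow> 'a^'n^'n \<Rightarrow> 'a" where
  "bV X Y = (\<Sum>i\<in>UNIV. \<Sum>j\<in>UNIV. \<Sum>k\<in>UNIV. \<Sum>l\<in>UNIV.
      X$i$j * Y$k$l * bV_pure (axis i 1) (axis j 1) (axis k 1) (axis l 1))"

definition smult_mat :: "'a::comm_ring_1 \<Rightarrow> 'a^'n^'n \<Rightarrow> 'a^'n^'n" where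
  "smult_mat c X = (\<chi> i j. c * X$i$j)"

definition bilinear_form :: "('a::comm_ring_1^'n^'n \<Rightarrow> 'a^'n^'n \<Rightarrow> 'a) \<Rightarrow> bool" where
  "bilinear_form B \<longleftrightarrow>
     (\<forall>X X' Y. B (X + X') Y = B X Y + B X' Y) \<and>
     (\<forall>X Y Y'. B X (Y + Y') = B X Y + B X Y') \<and>
     (\<forall>c X Y. B (smult_mat c X) Y = c * B X Y) \<and>
     (\<forall>c X Y. B X (smult_mat c Y) = c * B X Y)"

definition alternating :: "('a::comm_ring_1^'n^'n \<Rightarrow> 'a^'n^'n \<Rightarrow> 'a) \<Rightarrow> bool" where
  "alternating B \<longleftrightarrow> (\<forall>X. B X X = 0)"

text \<open>SL(V) acts on V \<otimes> V* by g\<cdot>(v \<otimes> f) = g v \<otimes> f \<circ> g\<inverse>, i.e. X \<mapsto> g X g\<inverse>.\<close>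
definition SL_invariant :: "('a::comm_ring_1^'n^'n \<Rightarrow> 'a^'n^'n \<Rightarrow> 'a) \<Rightarrow> bool" where
  "SL_invariant B \<longleftrightarrow>
     (\<forall>g h X Y. det g = 1 \<and> g ** h = mat 1 \<longrightarrow> B (g ** X ** h) (g ** Y ** h) = B X Y)"

end

theory Submission
  imports Defs
begin

definition Emat :: "'n \<Rightarrow> 'n \<Rightarrow> 'a::comm_ring_1^'n^'n" where
  "Emat i j = (\<chi> r s. if r = i \<and> s = j then 1 else 0)"

lemma Emat_nth [simp]: "Emat i j $ r $ s = (if r = i \<and> s = j then 1 else 0)"
  by (simp add: Emat_def)

lemma mult_E: "(A ** Emat i j ** C) $ r $ s = A$r$i * C$j$s"
proof -
  have h: "(A ** Emat i j) $ r $ t = (if t = j then A$r$i else 0)" for t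
    by (simp add: matrix_matrix_mult_def if_distrib cong: if_cong)
  have "(A ** Emat i j ** C) $ r $ s = (\<Sum>k\<in>UNIV. (A ** Emat i j) $ r $ k * C$k$s)"
    by (simp add: matrix_matrix_mult_def[of "A ** Emat i j" C])
  also have "\<dots> = (\<Sum>k\<in>UNIV. if k = j then A$r$i * C$k$s else 0)"
    by (rule sum.cong) (auto simp: h)
  finally show ?thesis by simp
qed

lemma delta2: "(\<Sum>x\<in>UNIV. \<Sum>y\<in>UNIV. if (i::'n::finite) = x \<and> (j::'m::finite) = y then f x y else 0) = (f i j :: 'a::comm_monoid_add)"
proof -
  have "(\<Sum>x\<in>UNIV. \<Sum>y\<in>UNIV. if i = x \<and> j = y then f x y else 0)
     = (\<Sum>x\<in>UNIV. if i = x then (\<Sum>y\<in>UNIV. if j = y then f x y else 0) else 0)"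
    by (rule sum.cong) auto
  then show ?thesis by simp
qed

lemma expand_mat: "X = (\<Sum>i\<in>UNIV. \<Sum>j\<in>UNIV. smult_mat (X$i$j) (Emat i j))"
  by (simp add: vec_eq_iff smult_mat_def if_distrib delta2 cong: if_cong)

lemma smult_nth [simp]: "smult_mat c X $ i $ j = c * X$i$j"
  by (simp add: smult_mat_def)

context
  fixes B :: "'a::comm_ring_1^'n^'n \<Rightarrow> 'a^'n^'n \<Rightarrow> 'a"
  assumes bil: "bilinear_form B"
begin

lemma B_add1: "B (X + X') Y = B X Y + B X' Y" using bil by (simp add: bilinear_form_def)
lemma B_add2: "B X (Y + Y') = B X Y + B X Y'" using bil by (simp add: bilinear_form_def)
lemma B_sm1: "B (smult_mat c X) Y = c * B X Y" using bil by (simp add: bilinear_form_def)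
lemma B_sm2: "B X (smult_mat c Y) = c * B X Y" using bil by (simp add: bilinear_form_def)

lemma B_zero1: "B 0 Y = 0" using B_add1[of 0 0 Y] by simp
lemma B_zero2: "B X 0 = 0" using B_add2[of X 0 0] by simp

lemma B_diff1: "B (X - X') Y = B X Y - B X' Y"
  using B_add1[of "X - X'" X' Y] by (simp add: algebra_simps)
lemma B_diff2: "B X (Y - Y') = B X Y - B X Y'"
  using B_add2[of X "Y - Y'" Y'] by (simp add: algebra_simps)

lemma B_sum1: "finite S \<Longrightarrow> B (sum f S) Y = (\<Sum>x\<in>S. B (f x) Y)"
  by (induction S rule: finite_induct) (auto simp: B_zero1 B_add1)
lemma B_sum2: "finite S \<Longrightarrow> B X (sum f S) = (\<Sum>x\<in>S. B X (f x))"
  by (induction S rule: finite_induct) (auto simp: B_zero2 B_add2)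

lemma B_expand: "B X Y = (\<Sum>i\<in>UNIV. \<Sum>j\<in>UNIV. \<Sum>k\<in>UNIV. \<Sum>l\<in>UNIV.
      X$i$j * Y$k$l * B (Emat i j) (Emat k l))"
proof -
  have "B X Y = B (\<Sum>i\<in>UNIV. \<Sum>j\<in>UNIV. smult_mat (X$i$j) (Emat i j))
                  (\<Sum>k\<in>UNIV. \<Sum>l\<in>UNIV. smult_mat (Y$k$l) (Emat k l))"
    using expand_mat[of X] expand_mat[of Y] by simp
  also have "\<dots> = (\<Sum>i\<in>UNIV. \<Sum>j\<in>UNIV. X$i$j * B (Emat i j)
                  (\<Sum>k\<in>UNIV. \<Sum>l\<in>UNIV. smult_mat (Y$k$l) (Emat k l)))"
    by (simp add: B_sum1 B_sm1)
  also have "\<dots> = (\<Sum>i\<in>UNIV. \<Sum>j\<in>UNIV. \<Sum>k\<in>UNIV. \<Sum>l\<in>UNIV.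
      X$i$j * (Y$k$l * B (Emat i j) (Emat k l)))"
    by (simp add: B_sum2 B_sm2 sum_distrib_left)
  finally show ?thesis by (simp add: mult.assoc)
qed

end

lemma pairing_axis: "pairing (axis j 1) (axis k (1::'a::comm_ring_1)) = (if j = k then 1 else 0)"
proof -
  have "pairing (axis j 1) (axis k (1::'a)) = (\<Sum>i\<in>UNIV. if i = j then (if j = k then 1 else 0) else 0)"
    unfolding pairing_def by (rule sum.cong) (auto simp: axis_def)
  then show ?thesis by simp
qed

lemma bV_expand: "bV X Y = (\<Sum>i\<in>UNIV. \<Sum>j\<in>UNIV. \<Sum>k\<in>UNIV. \<Sum>l\<in>UNIV.
      X$i$j * Y$k$l * ((if j = k then 1 else 0) * (if l = i then 1 else 0)
        + (if j = i then 1 else 0) * (if l = k then 1 else (0::'a::comm_ring_1))))"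
  unfolding bV_def bV_pure_def pairing_axis by (simp add: eq_commute)

definition Tg :: "'n \<Rightarrow> 'n \<Rightarrow> 'a::comm_ring_1^'n^'n" where
  "Tg a b = (\<chi> r s. (if r = s then 1 else 0) + (if r = a \<and> s = b then 1 else 0))"
definition Th :: "'n \<Rightarrow> 'n \<Rightarrow> 'a::comm_ring_1^'n^'n" where
  "Th a b = (\<chi> r s. (if r = s then 1 else 0) - (if r = a \<and> s = b then 1 else 0))"

lemma Tg_nth [simp]: "Tg a b $ r $ s = (if r = s then 1 else 0) + (if r = a \<and> s = b then 1 else 0)"
  by (simp add: Tg_def)
lemma Th_nth [simp]: "Th a b $ r $ s = (if r = s then 1 else 0) - (if r = a \<and> s = b then 1 else 0)"
  by (simp add: Th_def)

lemma det_Tg: assumes "a \<noteq> b" shows "det (Tg a b :: 'a::comm_ring_1^'n^'n) = 1"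
proof -
  have "Tg a b = (\<chi> k. if k = a then row a (mat 1) + (1::'a) *s row b (mat 1) else row k (mat 1))"
    by (simp add: vec_eq_iff row_def mat_def)
  then show ?thesis using det_row_operation[OF assms, of "mat 1" 1] by (simp add: det_I)
qed

lemma Tg_Th: assumes "a \<noteq> b" shows "Tg a b ** Th a b = (mat 1 :: 'a::comm_ring_1^'n^'n)"
proof -
  have "(\<Sum>k\<in>UNIV. Tg a b $ r $ k * Th a b $ k $ s) = (if r = s then 1 else (0::'a))" for r s
  proof -
    have "(\<Sum>k\<in>UNIV. Tg a b $ r $ k * Th a b $ k $ s) =
       (\<Sum>k\<in>UNIV. (if k = r then Th a b $ r $ s else 0) + (if k = b then (if r = a then Th a b $ b $ s else 0) else 0))"
      by (rule sum.cong) (simp_all add: distrib_right del: Th_nth)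
    also have "\<dots> = Th a b $ r $ s + (if r = a then Th a b $ b $ s else 0)"
      by (simp add: sum.distrib del: Th_nth)
    also have "\<dots> = (if r = s then 1 else 0)"
      using assms by auto
    finally show ?thesis .
  qed
  then show ?thesis by (simp add: vec_eq_iff matrix_matrix_mult_def mat_def del: Tg_nth Th_nth)
qed

definition Dg :: "('n \<Rightarrow> 'a) \<Rightarrow> 'a::field^'n^'n" where
  "Dg t = (\<chi> r s. if r = s then t r else 0)"

lemma Dg_nth [simp]: "Dg t $ r $ s = (if r = s then t r else 0)"
  by (simp add: Dg_def)

lemma Dg_mult: assumes "\<And>m. t m \<noteq> 0" shows "Dg t ** Dg (\<lambda>m. inverse (t m)) = mat 1"
proof -
  have "(\<Sum>k\<in>UNIV. Dg t $ r $ k * Dg (\<lambda>m. inverse (t m)) $ k $ s) = (if r = s then 1 else 0)" for r s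
  proof -
    have "(\<Sum>k\<in>UNIV. Dg t $ r $ k * Dg (\<lambda>m. inverse (t m)) $ k $ s)
       = (\<Sum>k\<in>UNIV. if k = r then (if r = s then 1 else 0) else 0)"
      by (rule sum.cong) (use assms in auto)
    then show ?thesis by simp
  qed
  then show ?thesis by (simp add: vec_eq_iff matrix_matrix_mult_def mat_def del: Dg_nth)
qed

lemma det_Dg: "det (Dg t) = prod t UNIV"
  by (subst det_diagonal) auto


lemma alt_anti:
  assumes bil: "bilinear_form B" and alt: "alternating B"
  shows "B X Y = - B Y X"
proof -
  have "0 = B (X + Y) (X + Y)" using alt by (simp add: alternating_def)
  also have "\<dots> = B X X + B X Y + B Y X + B Y Y"
    by (simp add: B_add1[OF bil] B_add2[OF bil])
  also have "\<dots> = B X Y + B Y X" using alt by (simp add: alternating_def)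
  finally show ?thesis by (simp add: eq_neg_iff_add_eq_0)
qed


lemma torus:
  fixes B :: "'a::field^'n^'n \<Rightarrow> 'a^'n^'n \<Rightarrow> 'a"
  assumes bil: "bilinear_form B" and inv: "SL_invariant B"
    and t0: "\<And>m. t m \<noteq> 0" and tp: "prod t UNIV = 1"
  shows "B (Emat i j) (Emat k l) * (t i * t k) = B (Emat i j) (Emat k l) * (t j * t l)"
proof -
  let ?g = "Dg t" and ?h = "Dg (\<lambda>m. inverse (t m))"
  have E: "?g ** Emat a b ** ?h = smult_mat (t a * inverse (t b)) (Emat a b)" for a b
    by (auto simp: vec_eq_iff mult_E)
  have gdet: "det ?g = 1" using det_Dg[of t] tp by simp
  have gh: "?g ** ?h = mat 1" by (rule Dg_mult) (rule t0)
  have I: "B (?g ** X ** ?h) (?g ** Y ** ?h) = B X Y" for X Y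
    using inv gdet gh unfolding SL_invariant_def by blast
  have "B (Emat i j) (Emat k l) = B (?g ** Emat i j ** ?h) (?g ** Emat k l ** ?h)"
    by (rule I[symmetric])
  also have "\<dots> = (t i * inverse (t j)) * ((t k * inverse (t l)) * B (Emat i j) (Emat k l))"
    by (simp add: E B_sm1[OF bil] B_sm2[OF bil])
  finally have "B (Emat i j) (Emat k l) * (t j * t l) = (t i * inverse (t j)) * ((t k * inverse (t l)) * B (Emat i j) (Emat k l)) * (t j * t l)"
    by simp
  also have "\<dots> = B (Emat i j) (Emat k l) * (t i * t k)"
    using t0 by (simp add: field_simps)
  finally show ?thesis by (rule sym)
qed


definition tt :: "'n \<Rightarrow> 'n \<Rightarrow> 'a::field \<Rightarrow> 'n \<Rightarrow> 'a" where
  "tt p q s m = (if m = p then s else if m = q then inverse s else 1)"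

lemma tt_nz: "s \<noteq> 0 \<Longrightarrow> tt p q s m \<noteq> 0"
  by (simp add: tt_def)

lemma tt_prod: assumes "p \<noteq> q" "s \<noteq> 0" shows "prod (tt p q s) (UNIV::'n::finite set) = 1"
proof -
  have "prod (tt p q s) (UNIV::'n set) = tt p q s p * prod (tt p q s) (UNIV - {p})"
    by (rule prod.remove) auto
  also have "prod (tt p q s) (UNIV - {p}) = tt p q s q * prod (tt p q s) (UNIV - {p} - {q})"
    by (rule prod.remove) (use assms in auto)
  also have "prod (tt p q s) (UNIV - {p} - {q}) = 1"
    by (rule prod.neutral) (auto simp: tt_def)
  finally show ?thesis using assms by (simp add: tt_def)
qed

lemma torus_tt:
  fixes B :: "'a::field^'n^'n \<Rightarrow> 'a^'n^'n \<Rightarrow> 'a"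
  assumes bil: "bilinear_form B" and inv: "SL_invariant B" and pq: "p \<noteq> q" and s0: "s \<noteq> 0"
  shows "B (Emat i j) (Emat k l) * (tt p q s i * tt p q s k) = B (Emat i j) (Emat k l) * (tt p q s j * tt p q s l)"
  by (rule torus[OF bil inv tt_nz[OF s0] tt_prod[OF pq s0]])

lemma torus_zero:
  fixes B :: "'a::field^'n^'n \<Rightarrow> 'a^'n^'n \<Rightarrow> 'a" and s :: 'a
  assumes bil: "bilinear_form B" and inv: "SL_invariant B"
    and s0: "s \<noteq> 0" and s1: "s \<noteq> 1" and s2: "s * s \<noteq> 1" and s3: "s * s * s \<noteq> 1" and s4: "s * s * s * s \<noteq> 1"
    and nt: "\<not> (i = j \<and> k = l)" "\<not> (i = l \<and> k = j)"
  shows "B (Emat i j) (Emat k l) = 0"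
proof (rule ccontr)
  let ?b = "B (Emat i j) (Emat k l)"
  assume b0: "?b \<noteq> 0"
  have key: "tt p q s i * tt p q s k = tt p q s j * tt p q s l" if "p \<noteq> q" for p q
    using torus_tt[OF bil inv that s0, of i j k l] b0 by simp
  consider "i \<noteq> j" "i \<noteq> l" | "i = j" | "i \<noteq> j" "i = l" by blast
  then show False
  proof cases
    case 1
    have e: "s * tt i j s k = inverse s * tt i j s l"
      using key[OF 1(1)] 1 by (simp add: tt_def)
    have e: "s * tt i j s k = inverse s * tt i j s l"
      using key[OF 1(1)] 1 by (simp add: tt_def)
    have inv2: "inverse s * inverse s \<noteq> 1" using s0 s2 by (simp add: field_simps)
    have inv1: "inverse s \<noteq> 1" using s0 s1 by (simp add: field_simps)
    have c3: "s * s \<noteq> inverse s" using s0 s3 by (simp add: field_simps)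
    have c4: "s * s \<noteq> inverse s * inverse s" using s0 s4 by (simp add: field_simps)
    have c3': "s \<noteq> inverse s * inverse s" using s0 s3 by (simp add: field_simps)
    have c2: "s \<noteq> inverse s" using s0 s2 by (simp add: field_simps)
    have Tl: "tt i j s l = (if l = j then inverse s else 1)" using 1 by (simp add: tt_def)
    consider "k = i" | "k = j" | "k \<noteq> i" "k \<noteq> j" by blast
    then show False
    proof cases
      case 1
      then have "tt i j s k = s" by (simp add: tt_def)
      then show False using e Tl c3 c4 by (auto split: if_splits)
    next
      case 2
      then have "tt i j s k = inverse s" using \<open>i \<noteq> j\<close> by (simp add: tt_def)
      then show False using e Tl s0 inv1 inv2 by (auto split: if_splits)
    next
      case 3
      then have "tt i j s k = 1" by (simp add: tt_def)
      then show False using e Tl c2 c3' by (auto split: if_splits)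
    qed
  next
    case 2
    with nt have kl: "k \<noteq> l" by auto
    have "s = inverse s"
      using key[OF kl] 2 kl s0 by (auto simp: tt_def split: if_splits)
    then show False using s0 s2 by (simp add: field_simps)
  next
    case 3
    with nt have kj: "k \<noteq> j" by auto
    have "s = inverse s"
      using key[OF kj] 3 kj s0 by (auto simp: tt_def split: if_splits)
    then show False using s0 s2 by (simp add: field_simps)
  qed
qed



lemma TE1: "a \<noteq> b \<Longrightarrow> Tg a b ** Emat b a ** Th a b = (Emat b a + Emat a a - Emat b b - Emat a b :: 'a::comm_ring_1^'n^'n)"
  by (auto simp: vec_eq_iff mult_E)
lemma TE2: "a \<noteq> b \<Longrightarrow> Tg a b ** Emat b b ** Th a b = (Emat b b + Emat a b :: 'a::comm_ring_1^'n^'n)"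
  by (auto simp: vec_eq_iff mult_E)
lemma TE3: "a \<noteq> b \<Longrightarrow> a \<noteq> c \<Longrightarrow> Tg b c ** Emat a a ** Th b c = (Emat a a :: 'a::comm_ring_1^'n^'n)"
  by (auto simp: vec_eq_iff mult_E)

lemma exists_s: "\<exists>s::'a::alg_closed_field. s \<noteq> 0 \<and> s ^ 12 \<noteq> 1"
proof (rule ccontr)
  assume "\<not> ?thesis"
  then have all: "x ^ 13 = x" for x :: 'a
    by (cases "x = 0") (auto simp: power_Suc[of x 12, simplified])
  define f :: "nat \<Rightarrow> 'a" where "f = (\<lambda>i. if i = 0 then 1 else if i = 1 then -1 else if i = 13 then 1 else 0)"
  have "\<exists>x. (\<Sum>k\<le>13. f k * x ^ k) = 0"
    by (rule alg_closed) (auto simp: f_def)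
  then obtain x where x: "(\<Sum>k\<le>13. f k * x ^ k) = 0" by blast
  have "(\<Sum>k\<le>13. f k * x ^ k) = (\<Sum>k\<in>{0,1,13}. f k * x ^ k)"
    by (intro sum.mono_neutral_right) (auto simp: f_def)
  also have "\<dots> = 1 - x + x ^ 13" by (simp add: f_def)
  also have "\<dots> = 1" using all[of x] by simp
  finally show False using x by simp
qed

theorem lemma8p2:
  fixes B :: "'a::alg_closed_field^'n^'n \<Rightarrow> 'a^'n^'n \<Rightarrow> 'a"
  assumes "CHAR('a) = 2"
    and "CARD('n) \<ge> 2"
    and "bilinear_form B"
    and "alternating B"
    and "SL_invariant B"
  shows "\<exists>c::'a. \<forall>X Y. B X Y = c * bV X Y"
proof -
  note bil = assms(3) and alt = assms(4) and inv = assms(5)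
  have two: "(2::'a) = 0" using of_nat_CHAR[where 'a='a] assms(1) by simp
  have negid: "- x = x" for x :: 'a
  proof -
    have "x + x = 2 * x" by simp
    then have "x + x = 0" using two by simp
    then show ?thesis by (simp add: add_eq_0_iff)
  qed
  obtain s :: 'a where s0: "s \<noteq> 0" and s12: "s ^ 12 \<noteq> 1" using exists_s by blast
  have s1: "s \<noteq> 1" using s12 by auto
  have s2: "s * s \<noteq> 1"
  proof
    assume "s * s = 1" then have "(s * s) ^ 6 = 1" by simp
    then show False using s12 by (simp add: power_mult[symmetric] power2_eq_square[symmetric])
  qed
  have s3: "s * s * s \<noteq> 1"
  proof
    assume "s * s * s = 1" then have "(s * s * s) ^ 4 = 1" by simp
    moreover have "(s * s * s) ^ 4 = s^12" by (simp add: power_mult[symmetric] power3_eq_cube[symmetric])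
    ultimately show False using s12 by simp
  qed
  have s4: "s * s * s * s \<noteq> 1"
  proof
    assume "s * s * s * s = 1" then have "(s * s * s * s) ^ 3 = 1" by simp
    moreover have "s * s * s * s = s ^ 4" by (simp add: numeral_eq_Suc)
    ultimately have "(s ^ 4) ^ 3 = 1" by simp
    then show False using s12 by (simp add: power_mult[symmetric])
  qed
  define \<beta> where "\<beta> i j k l = B (Emat i j) (Emat k l)" for i j k l
  have Z: "\<beta> i j k l = 0" if "\<not> (i = j \<and> k = l)" "\<not> (i = l \<and> k = j)" for i j k l
    unfolding \<beta>_def by (rule torus_zero[OF bil inv s0 s1 s2 s3 s4 that])
  have sym: "\<beta> i j k l = \<beta> k l i j" for i j k l
    unfolding \<beta>_def using alt_anti[OF bil alt] negid by metis
  have diag0: "\<beta> i i i i = 0" for i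
    using alt unfolding \<beta>_def alternating_def by simp
  have TI: "B (Tg a b ** X ** Th a b) (Tg a b ** Y ** Th a b) = B X Y" if "a \<noteq> b" for a b X Y
    using inv det_Tg[OF that] Tg_Th[OF that] unfolding SL_invariant_def by blast
  have R1: "\<beta> b a a b = \<beta> a a b b" if ab: "a \<noteq> b" for a b
  proof -
    have "\<beta> b a b b = B (Tg a b ** Emat b a ** Th a b) (Tg a b ** Emat b b ** Th a b)"
      unfolding \<beta>_def using TI[OF ab] by simp
    also have "\<dots> = \<beta> b a b b + \<beta> b a a b + \<beta> a a b b + \<beta> a a a b
        - \<beta> b b b b - \<beta> b b a b - \<beta> a b b b - \<beta> a b a b"
      unfolding TE1[OF ab] TE2[OF ab] \<beta>_def
      by (simp add: B_add1[OF bil] B_add2[OF bil] B_diff1[OF bil] B_diff2[OF bil] algebra_simps)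
    finally have "0 = \<beta> b a a b + \<beta> a a b b + \<beta> a a a b
        - \<beta> b b b b - \<beta> b b a b - \<beta> a b b b - \<beta> a b a b" by (simp add: algebra_simps)
    moreover have "\<beta> a a a b = 0" "\<beta> b b a b = 0" "\<beta> a b b b = 0" "\<beta> a b a b = 0"
      using ab by (auto intro!: Z)
    ultimately have "\<beta> b a a b = - \<beta> a a b b" using diag0[of b] by (simp add: eq_neg_iff_add_eq_0)
    then show ?thesis using negid by simp
  qed
  have R2: "\<beta> a a b b = \<beta> a a c c" if "a \<noteq> b" "a \<noteq> c" "b \<noteq> c" for a b c
  proof -
    have "\<beta> a a c b = B (Tg b c ** Emat a a ** Th b c) (Tg b c ** Emat c b ** Th b c)"
      unfolding \<beta>_def using TI[OF that(3)] by simp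
    also have "\<dots> = \<beta> a a c b + \<beta> a a b b - \<beta> a a c c - \<beta> a a b c"
      unfolding TE1[OF that(3)] TE3[OF that(1,2)] \<beta>_def
      by (simp add: B_add1[OF bil] B_add2[OF bil] B_diff1[OF bil] B_diff2[OF bil] algebra_simps)
    finally have "0 = \<beta> a a b b - \<beta> a a c c - \<beta> a a b c" by (simp add: algebra_simps)
    moreover have "\<beta> a a b c = 0" using that by (auto intro!: Z)
    ultimately show ?thesis by simp
  qed
  have L: "\<beta> a a b b = \<beta> a a b' b'" if "a \<noteq> b" "a \<noteq> b'" for a b b'
    using R2[OF that] by (cases "b = b'") auto
  obtain p q :: 'n where pq: "p \<noteq> q"
  proof -
    have "\<not> (\<forall>x y::'n. x = y)"
    proof
      assume "\<forall>x y::'n. x = y"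
      then have "card (UNIV::'n set) \<le> 1" by (simp add: card_le_Suc0_iff_eq)
      then show False using assms(2) by simp
    qed
    then show ?thesis using that by blast
  qed
  define c where "c = \<beta> p p q q"
  have Dc: "\<beta> a a b b = c" if "a \<noteq> b" for a b
  proof (cases "a = p")
    case True
    then show ?thesis unfolding c_def using L[of p b q] that pq by simp
  next
    case False
    have "\<beta> a a b b = \<beta> a a p p" using L[of a b p] that False by simp
    also have "\<dots> = \<beta> p p a a" by (rule sym)
    also have "\<dots> = c" unfolding c_def using L[of p a q] False pq by simp
    finally show ?thesis .
  qed
  have final: "B (Emat i j) (Emat k l) = c * ((if j = k then 1 else 0) * (if l = i then 1 else 0)
        + (if j = i then 1 else 0) * (if l = k then 1 else 0))" for i j k l
  proof -
    have "\<beta> i j k l = c * ((if j = k then 1 else 0) * (if l = i then 1 else 0)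
        + (if j = i then 1 else 0) * (if l = k then 1 else 0))"
    proof (cases "i = j \<and> k = l")
      case True
      show ?thesis
      proof (cases "i = k")
        case True
        then show ?thesis using \<open>i = j \<and> k = l\<close> diag0[of i] two by simp
      next
        case False
        then show ?thesis using \<open>i = j \<and> k = l\<close> Dc[of i k] by simp
      qed
    next
      case False
      show ?thesis
      proof (cases "i = l \<and> k = j")
        case True
        then have "\<beta> i j k l = \<beta> i j j i" by simp
        also have "\<dots> = \<beta> j j i i" using R1[of j i] True False by auto
        also have "\<dots> = c" using Dc[of j i] True False by auto
        finally show ?thesis using True False by auto
      next
        case False2: False
        then show ?thesis using Z[OF False False2] False by auto
      qed
    qed
    then show ?thesis unfolding \<beta>_def .
  qed
  show ?thesis
  proof (intro exI allI)
    fix X Y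
    show "B X Y = c * bV X Y"
      unfolding B_expand[OF bil, of X Y] bV_expand final
      by (simp add: sum_distrib_left mult_ac)
  qed
qed

end
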